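(* Let $N\ge1$, $\lambda_0,\dots,\lambda_N>0$ and $\gamma_0,\dots,\gamma_N\in\mathbb{C}$ distinct, and let $$\mathcal{R}(z)=\frac{\sum_{i=0}^N\sum_{j=i+1}^N\lambda_i^2\lambda_j^2(\gamma_i-\gamma_j)^2\prod_{k\neq i,j}(z-\gamma_k)}{\Big(\sum_{i=0}^N\lambda_i^2\Big)\Big(\sum_{j=0}^N\lambda_j^2\prod_{k\neq j}(z-\gamma_k)\Big)}$$ be the rational map of the JNR monopole with this data. Let $q(z)=\big(\frac{\lambda_0}{z-\gamma_0},\dots,\frac{\lambda_N}{z-\gamma_N}\big)$ and $q(\infty)=(\lambda_0,\dots,\lambda_N)$. Then there exists a unique $a=(a_0,\dots,a_N)\in\mathbb{C}^{N+1}$ such that $$\mathcal{R}(z)=\frac{\frac{a_0\lambda_0}{z-\gamma_0}+\cdots+\frac{a_N\lambda_N}{z-\gamma_N}}{\frac{\lambda_0^2}{z-\gamma_0}+\cdots+\frac{\lambda_N^2}{z-\gamma_N}}=\frac{\langle\bar a,q(z)\rangle}{\langle q(\infty),q(z)\rangle}.$$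
   Context: $\langle\cdot,\cdot\rangle$ is the standard Hermitian inner product on $\mathbb{C}^{N+1}$, conjugate-linear in the first factor, and $\bar a$ denotes the componentwise complex conjugate of $a$. *)

theory Defs
  imports Complex_Main "HOL-Library.FuncSet"
begin

definition jnr_R :: "nat \<Rightarrow> (nat \<Rightarrow> real) \<Rightarrow> (nat \<Rightarrow> complex) \<Rightarrow> complex \<Rightarrow> complex" where
  "jnr_R N lam gam z =
     (\<Sum>i=0..N. \<Sum>j=i+1..N. complex_of_real ((lam i)\<^sup>2 * (lam j)\<^sup>2) * (gam i - gam j)\<^sup>2
                 * (\<Prod>k\<in>{0..N} - {i, j}. z - gam k))
     / (complex_of_real (\<Sum>i=0..N. (lam i)\<^sup>2)
        * (\<Sum>j=0..N. complex_of_real ((lam j)\<^sup>2) * (\<Prod>k\<in>{0..N} - {j}. z - gam k)))"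

definition hinner :: "nat \<Rightarrow> (nat \<Rightarrow> complex) \<Rightarrow> (nat \<Rightarrow> complex) \<Rightarrow> complex" where
  "hinner N u v = (\<Sum>i=0..N. cnj (u i) * v i)"

definition jnr_q :: "(nat \<Rightarrow> real) \<Rightarrow> (nat \<Rightarrow> complex) \<Rightarrow> complex \<Rightarrow> nat \<Rightarrow> complex" where
  "jnr_q lam gam z i = complex_of_real (lam i) / (z - gam i)"

definition jnr_q_inf :: "(nat \<Rightarrow> real) \<Rightarrow> nat \<Rightarrow> complex" where
  "jnr_q_inf lam i = complex_of_real (lam i)"

end

theory Submission
  imports Defs "HOL-Computational_Algebra.Polynomial"
begin

lemma clear_denoms:
  fixes gam :: "nat \<Rightarrow> complex"
  assumes "z \<notin> gam ` A" "finite A"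
  shows "(\<Prod>k\<in>A. z - gam k) * (\<Sum>i\<in>A. c i / (z - gam i))
         = (\<Sum>i\<in>A. c i * (\<Prod>k\<in>A - {i}. z - gam k))"
  unfolding sum_distrib_left
proof (rule sum.cong[OF refl])
  fix i assume i: "i \<in> A"
  have nz: "z - gam i \<noteq> 0" using assms i by auto
  have "(\<Prod>k\<in>A. z - gam k) = (z - gam i) * (\<Prod>k\<in>A - {i}. z - gam k)"
    using prod.remove[OF assms(2) i] by simp
  then show "(\<Prod>k\<in>A. z - gam k) * (c i / (z - gam i)) = c i * (\<Prod>k\<in>A - {i}. z - gam k)"
    using nz by (simp only:) (simp add: field_simps)
qed

lemma eval_at_node:
  fixes gam :: "nat \<Rightarrow> complex"
  assumes "finite A" "m \<in> A"
  shows "(\<Sum>i\<in>A. c i * (\<Prod>k\<in>A - {i}. gam m - gam k)) = c m * (\<Prod>k\<in>A - {m}. gam m - gam k)"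
proof -
  have "(\<Sum>i\<in>A. c i * (\<Prod>k\<in>A - {i}. gam m - gam k)) =
        c m * (\<Prod>k\<in>A - {m}. gam m - gam k) + (\<Sum>i\<in>A - {m}. c i * (\<Prod>k\<in>A - {i}. gam m - gam k))"
    using sum.remove[OF assms] by simp
  also have "(\<Sum>i\<in>A - {m}. c i * (\<Prod>k\<in>A - {i}. gam m - gam k)) = 0"
  proof (rule sum.neutral, rule ballI)
    fix i assume "i \<in> A - {m}"
    then have "m \<in> A - {i}" using assms by auto
    then have "(\<Prod>k\<in>A - {i}. gam m - gam k) = 0"
      using assms(1) by (metis (no_types, lifting) finite_Diff prod_zero_iff right_minus_eq)
    then show "c i * (\<Prod>k\<in>A - {i}. gam m - gam k) = 0" by simp
  qed
  finally show ?thesis by simp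
qed

lemma node_prod_nz:
  fixes gam :: "nat \<Rightarrow> complex"
  assumes "finite A" "m \<in> A" "inj_on gam A"
  shows "(\<Prod>k\<in>A - {m}. gam m - gam k) \<noteq> 0"
  using assms by (auto simp: prod_zero_iff inj_on_def)

definition lpoly :: "nat set \<Rightarrow> (nat \<Rightarrow> complex) \<Rightarrow> (nat \<Rightarrow> complex) \<Rightarrow> complex poly" where
  "lpoly A gam c = (\<Sum>i\<in>A. smult (c i) (\<Prod>k\<in>A - {i}. [:- gam k, 1:]))"

lemma poly_lpoly: "poly (lpoly A gam c) z = (\<Sum>i\<in>A. c i * (\<Prod>k\<in>A - {i}. z - gam k))"
  by (simp add: lpoly_def poly_sum poly_prod)

lemma lpoly_nz:
  assumes "finite A" "m \<in> A" "inj_on gam A" "c m \<noteq> 0"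
  shows "lpoly A gam c \<noteq> 0"
proof
  assume "lpoly A gam c = 0"
  then have "poly (lpoly A gam c) (gam m) = 0" by simp
  then show False using assms eval_at_node[OF assms(1,2), of c gam] node_prod_nz[OF assms(1-3)]
    by (simp add: poly_lpoly)
qed

lemma uniq_pf:
  fixes gam :: "nat \<Rightarrow> complex"
  assumes fin: "finite A" and inj: "inj_on gam A" and inf: "infinite S"
    and S: "\<And>z. z \<in> S \<Longrightarrow> z \<notin> gam ` A \<and> (\<Sum>i\<in>A. b i / (z - gam i)) = 0"
    and m: "m \<in> A"
  shows "b m = 0"
proof (rule ccontr)
  assume "b m \<noteq> 0"
  then have nz: "lpoly A gam b \<noteq> 0" using lpoly_nz[OF fin m inj] by blast
  have "S \<subseteq> {z. poly (lpoly A gam b) z = 0}"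
  proof
    fix z assume "z \<in> S"
    then show "z \<in> {z. poly (lpoly A gam b) z = 0}"
      using S[of z] clear_denoms[of z gam A b] fin by (simp add: poly_lpoly)
  qed
  then show False using poly_roots_finite[OF nz] inf finite_subset by blast
qed

lemma pair_sum:
  fixes g :: "nat \<Rightarrow> nat \<Rightarrow> 'a::ab_group_add"
  shows "(\<Sum>i=0..n. \<Sum>j=i+1..n. g i j + g j i) = (\<Sum>i=0..n. \<Sum>j=0..n. g i j) - (\<Sum>i=0..n. g i i)"
proof (induction n)
  case 0
  then show ?case by simp
next
  case (Suc n)
  have "(\<Sum>i=0..Suc n. \<Sum>j=i+1..Suc n. g i j + g j i)
     = (\<Sum>i=0..n. \<Sum>j=i+1..Suc n. g i j + g j i)"
    by simp
  also have "\<dots> = (\<Sum>i=0..n. (\<Sum>j=i+1..n. g i j + g j i) + (g i (Suc n) + g (Suc n) i))"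
    by (rule sum.cong[OF refl]) simp
  also have "\<dots> = (\<Sum>i=0..n. \<Sum>j=0..n. g i j) - (\<Sum>i=0..n. g i i) + (\<Sum>i=0..n. g i (Suc n)) + (\<Sum>i=0..n. g (Suc n) i)"
    by (subst sum.distrib[where h="\<lambda>i. g i (Suc n) + g (Suc n) i"], subst Suc.IH, simp add: sum.distrib)
  also have "\<dots> = (\<Sum>i=0..Suc n. \<Sum>j=0..Suc n. g i j) - (\<Sum>i=0..Suc n. g i i)"
    by (simp add: sum.distrib algebra_simps)
  finally show ?case .
qed


lemma existence_eq:
  fixes N :: nat and lam :: "nat \<Rightarrow> real" and gam :: "nat \<Rightarrow> complex"
  assumes lpos: "\<And>i. i \<le> N \<Longrightarrow> lam i > 0"
    and inj: "inj_on gam {0..N}"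
    and zn: "z \<notin> gam ` {0..N}"
    and Dnz: "(\<Sum>i=0..N. complex_of_real ((lam i)\<^sup>2) / (z - gam i)) \<noteq> 0"
  defines "L \<equiv> (\<Sum>i=0..N. complex_of_real ((lam i)\<^sup>2))"
    and "M \<equiv> (\<Sum>i=0..N. complex_of_real ((lam i)\<^sup>2) * gam i)"
  shows "jnr_R N lam gam z =
      (\<Sum>i=0..N. (complex_of_real (lam i) * (gam i - M / L)) * complex_of_real (lam i) / (z - gam i))
      / (\<Sum>i=0..N. complex_of_real ((lam i)\<^sup>2) / (z - gam i))"
proof -
  define D where "D = (\<Sum>i=0..N. complex_of_real ((lam i)\<^sup>2) / (z - gam i))"
  define P where "P = (\<Prod>k\<in>{0..N}. z - gam k)"
  define w where "w i j = complex_of_real ((lam i)\<^sup>2 * (lam j)\<^sup>2)" for i j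
  define g where "g i j = w i j * (gam i - gam j) / (z - gam i)" for i j
  have Pnz: "P \<noteq> 0" using zn unfolding P_def by (auto simp: prod_zero_iff)
  have "(\<Sum>i=0..N. (lam i)\<^sup>2) > 0"
  proof -
    have "(\<Sum>i=0..N. (lam i)\<^sup>2) \<ge> (lam 0)\<^sup>2"
      by (rule member_le_sum) auto
    moreover have "(lam 0)\<^sup>2 > 0" using lpos[of 0] by simp
    ultimately show ?thesis by linarith
  qed
  then have Lnz: "L \<noteq> 0" unfolding L_def by (metis of_real_sum of_real_eq_0_iff of_real_power less_irrefl)
  have den: "(\<Sum>j=0..N. complex_of_real ((lam j)\<^sup>2) * (\<Prod>k\<in>{0..N} - {j}. z - gam k)) = P * D"
    unfolding P_def D_def using clear_denoms[OF zn, of "\<lambda>i. complex_of_real ((lam i)\<^sup>2)"] by simp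
  have term_eq: "w i j * (gam i - gam j)\<^sup>2 * (\<Prod>k\<in>{0..N} - {i, j}. z - gam k) = P * (g i j + g j i)"
    if ij: "i \<le> N" "j \<le> N" "i < j" for i j
  proof -
    have zi: "z - gam i \<noteq> 0" and zj: "z - gam j \<noteq> 0" using zn ij by auto
    have "P = (z - gam i) * (\<Prod>k\<in>{0..N} - {i}. z - gam k)"
      unfolding P_def by (rule prod.remove) (use ij in auto)
    also have "(\<Prod>k\<in>{0..N} - {i}. z - gam k) = (z - gam j) * (\<Prod>k\<in>{0..N} - {i} - {j}. z - gam k)"
      by (rule prod.remove) (use ij in auto)
    finally have P1: "P = (z - gam i) * ((z - gam j) * (\<Prod>k\<in>{0..N} - {i} - {j}. z - gam k))" .
    have P2: "P = (z - gam i) * (z - gam j) * (\<Prod>k\<in>{0..N} - {i, j}. z - gam k)"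
    proof -
      have "{0..N} - {i} - {j} = {0..N} - {i, j}" by auto
      then show ?thesis using P1 by (simp add: mult.assoc)
    qed
    have wsym: "w j i = w i j" unfolding w_def by simp
    have pf: "(gam i - gam j)\<^sup>2 / ((z - gam i) * (z - gam j)) =
        (gam i - gam j) / (z - gam i) + (gam j - gam i) / (z - gam j)"
      using zi zj by (simp add: field_simps power2_eq_square)
    have gg: "g i j + g j i = w i j * ((gam i - gam j) / (z - gam i) + (gam j - gam i) / (z - gam j))"
      unfolding g_def wsym by (simp add: distrib_left)
    have "P * (g i j + g j i) = (z - gam i) * (z - gam j) * (\<Prod>k\<in>{0..N} - {i, j}. z - gam k) * w i j *
         ((gam i - gam j)\<^sup>2 / ((z - gam i) * (z - gam j)))"
      unfolding gg pf P2 by (simp add: mult_ac)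
    also have "\<dots> = w i j * (\<Prod>k\<in>{0..N} - {i, j}. z - gam k) * (gam i - gam j)\<^sup>2"
      using zi zj by simp
    finally show ?thesis by (simp add: mult_ac)
  qed
  have num: "(\<Sum>i=0..N. \<Sum>j=i+1..N. w i j * (gam i - gam j)\<^sup>2 * (\<Prod>k\<in>{0..N} - {i, j}. z - gam k))
      = P * (\<Sum>i=0..N. \<Sum>j=i+1..N. g i j + g j i)"
    unfolding sum_distrib_left
    by (intro sum.cong refl) (auto intro!: term_eq)
  have S2: "(\<Sum>i=0..N. \<Sum>j=i+1..N. g i j + g j i) = (\<Sum>i=0..N. \<Sum>j=0..N. g i j)"
    unfolding pair_sum by (simp add: g_def)
  have S3: "(\<Sum>i=0..N. \<Sum>j=0..N. g i j) =
      (\<Sum>i=0..N. complex_of_real ((lam i)\<^sup>2) / (z - gam i) * (L * gam i - M))"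
  proof (rule sum.cong[OF refl])
    fix i assume "i \<in> {0..N}"
    have "(\<Sum>j=0..N. g i j) = complex_of_real ((lam i)\<^sup>2) / (z - gam i) *
         (\<Sum>j=0..N. complex_of_real ((lam j)\<^sup>2) * (gam i - gam j))"
      unfolding g_def w_def sum_distrib_left by (intro sum.cong refl) (simp add: field_simps)
    also have "(\<Sum>j=0..N. complex_of_real ((lam j)\<^sup>2) * (gam i - gam j)) = L * gam i - M"
      unfolding L_def M_def by (simp add: algebra_simps sum_distrib_left sum_subtractf)
    finally show "(\<Sum>j=0..N. g i j) = complex_of_real ((lam i)\<^sup>2) / (z - gam i) * (L * gam i - M)" .
  qed
  have A: "L * (\<Sum>i=0..N. (complex_of_real (lam i) * (gam i - M / L)) * complex_of_real (lam i) / (z - gam i))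
      = (\<Sum>i=0..N. complex_of_real ((lam i)\<^sup>2) / (z - gam i) * (L * gam i - M))"
    unfolding sum_distrib_left
  proof (intro sum.cong refl)
    fix x assume "x \<in> {0..N}"
    then have "z - gam x \<noteq> 0" using zn by auto
    then show "L * (complex_of_real (lam x) * (gam x - M / L) * complex_of_real (lam x) / (z - gam x)) =
      complex_of_real ((lam x)\<^sup>2) / (z - gam x) * (L * gam x - M)"
      using Lnz by (simp add: field_simps power2_eq_square)
  qed
  have "jnr_R N lam gam z = P * (\<Sum>i=0..N. complex_of_real ((lam i)\<^sup>2) / (z - gam i) * (L * gam i - M)) / (L * (P * D))"
    unfolding jnr_R_def den num[unfolded w_def] S2 S3 L_def by simp
  also have "\<dots> = L * (\<Sum>i=0..N. (complex_of_real (lam i) * (gam i - M / L)) * complex_of_real (lam i) / (z - gam i)) / (L * D)"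
    unfolding A[symmetric] using Pnz by simp
  also have "\<dots> = (\<Sum>i=0..N. (complex_of_real (lam i) * (gam i - M / L)) * complex_of_real (lam i) / (z - gam i)) / D"
    using Lnz by simp
  finally show ?thesis unfolding D_def .
qed


lemma hinner_part:
  "(\<Sum>i=0..N. a i * complex_of_real (lam i) / (z - gam i))
                / (\<Sum>i=0..N. complex_of_real ((lam i)\<^sup>2) / (z - gam i))
              = hinner N (\<lambda>i. cnj (a i)) (jnr_q lam gam z)
                / hinner N (jnr_q_inf lam) (jnr_q lam gam z)"
  by (simp add: hinner_def jnr_q_def jnr_q_inf_def power2_eq_square)

theorem mainTheorem6:
  fixes N :: nat and lam :: "nat \<Rightarrow> real" and gam :: "nat \<Rightarrow> complex"
  assumes "N \<ge> 1"
    and "\<And>i. i \<le> N \<Longrightarrow> lam i > 0"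
    and "inj_on gam {0..N}"
  shows "\<exists>!a. a \<in> {0..N} \<rightarrow>\<^sub>E (UNIV :: complex set) \<and>
           (\<forall>z. z \<notin> gam ` {0..N} \<and>
                 (\<Sum>i=0..N. complex_of_real ((lam i)\<^sup>2) / (z - gam i)) \<noteq> 0 \<longrightarrow>
              jnr_R N lam gam z =
                (\<Sum>i=0..N. a i * complex_of_real (lam i) / (z - gam i))
                / (\<Sum>i=0..N. complex_of_real ((lam i)\<^sup>2) / (z - gam i))
            \<and> (\<Sum>i=0..N. a i * complex_of_real (lam i) / (z - gam i))
                / (\<Sum>i=0..N. complex_of_real ((lam i)\<^sup>2) / (z - gam i))
              = hinner N (\<lambda>i. cnj (a i)) (jnr_q lam gam z)
                / hinner N (jnr_q_inf lam) (jnr_q lam gam z))"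
proof -
  define L where "L = (\<Sum>i=0..N. complex_of_real ((lam i)\<^sup>2))"
  define M where "M = (\<Sum>i=0..N. complex_of_real ((lam i)\<^sup>2) * gam i)"
  define a0 where "a0 = (\<lambda>i\<in>{0..N}. complex_of_real (lam i) * (gam i - M / L))"
  define D where "D z = (\<Sum>i=0..N. complex_of_real ((lam i)\<^sup>2) / (z - gam i))" for z
  let ?Q = "\<lambda>a. a \<in> {0..N} \<rightarrow>\<^sub>E (UNIV :: complex set) \<and>
           (\<forall>z. z \<notin> gam ` {0..N} \<and>
                 (\<Sum>i=0..N. complex_of_real ((lam i)\<^sup>2) / (z - gam i)) \<noteq> 0 \<longrightarrow>
              jnr_R N lam gam z =
                (\<Sum>i=0..N. a i * complex_of_real (lam i) / (z - gam i))
                / (\<Sum>i=0..N. complex_of_real ((lam i)\<^sup>2) / (z - gam i))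
            \<and> (\<Sum>i=0..N. a i * complex_of_real (lam i) / (z - gam i))
                / (\<Sum>i=0..N. complex_of_real ((lam i)\<^sup>2) / (z - gam i))
              = hinner N (\<lambda>i. cnj (a i)) (jnr_q lam gam z)
                / hinner N (jnr_q_inf lam) (jnr_q lam gam z))"
  have ex: "?Q a0"
  proof (intro conjI allI impI)
    show "a0 \<in> {0..N} \<rightarrow>\<^sub>E UNIV" unfolding a0_def by simp
  next
    fix z assume z: "z \<notin> gam ` {0..N} \<and> (\<Sum>i=0..N. complex_of_real ((lam i)\<^sup>2) / (z - gam i)) \<noteq> 0"
    have "(\<Sum>i=0..N. a0 i * complex_of_real (lam i) / (z - gam i)) =
          (\<Sum>i=0..N. (complex_of_real (lam i) * (gam i - M / L)) * complex_of_real (lam i) / (z - gam i))"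
      unfolding a0_def by (intro sum.cong refl) simp
    then show "jnr_R N lam gam z =
                (\<Sum>i=0..N. a0 i * complex_of_real (lam i) / (z - gam i))
                / (\<Sum>i=0..N. complex_of_real ((lam i)\<^sup>2) / (z - gam i))"
      using existence_eq[of N lam gam z] assms z unfolding L_def M_def by simp
  next
    fix z show "(\<Sum>i=0..N. a0 i * complex_of_real (lam i) / (z - gam i))
                / (\<Sum>i=0..N. complex_of_real ((lam i)\<^sup>2) / (z - gam i))
              = hinner N (\<lambda>i. cnj (a0 i)) (jnr_q lam gam z)
                / hinner N (jnr_q_inf lam) (jnr_q lam gam z)" by (rule hinner_part)
  qed
  define p where "p = lpoly {0..N} gam (\<lambda>i. complex_of_real ((lam i)\<^sup>2))"
  have pnz: "p \<noteq> 0" unfolding p_def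
    by (rule lpoly_nz[of _ 0]) (use assms(2)[of 0] assms(3) in auto)
  define S where "S = UNIV - (gam ` {0..N} \<union> {z. poly p z = 0})"
  have infS: "infinite S"
  proof
    assume "finite S"
    moreover have "finite (gam ` {0..N} \<union> {z. poly p z = 0})"
      using poly_roots_finite[OF pnz] by simp
    ultimately have "finite (S \<union> (gam ` {0..N} \<union> {z. poly p z = 0}))" by simp
    moreover have "S \<union> (gam ` {0..N} \<union> {z. poly p z = 0}) = UNIV" unfolding S_def by auto
    ultimately show False using infinite_UNIV_char_0 by auto
  qed
  have Sgood: "z \<notin> gam ` {0..N} \<and> D z \<noteq> 0" if "z \<in> S" for z
  proof -
    have zn: "z \<notin> gam ` {0..N}" and pz: "poly p z \<noteq> 0" using that unfolding S_def by auto
    have "(\<Prod>k\<in>{0..N}. z - gam k) * D z = poly p z"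
      unfolding D_def p_def poly_lpoly by (rule clear_denoms[OF zn]) simp
    then show ?thesis using zn pz by auto
  qed
  have un: "a = b" if qa: "?Q a" and qb: "?Q b" for a b
  proof
    fix i
    show "a i = b i"
    proof (cases "i \<in> {0..N}")
      case False
      have "a \<in> {0..N} \<rightarrow>\<^sub>E UNIV" "b \<in> {0..N} \<rightarrow>\<^sub>E UNIV"
        using conjunct1[OF qa] conjunct1[OF qb] by blast+
      then show ?thesis using False PiE_arb[of a "{0..N}" "\<lambda>_. UNIV" i] PiE_arb[of b "{0..N}" "\<lambda>_. UNIV" i] by presburger
    next
      case True
      have "(\<lambda>i. (a i - b i) * complex_of_real (lam i)) i = 0"
      proof (rule uniq_pf[of "{0..N}" gam S])
        show "i \<in> {0..N}" by fact
        show "inj_on gam {0..N}" by (rule assms)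
        fix z assume "z \<in> S"
        note g = Sgood[OF this]
        have ea: "jnr_R N lam gam z = (\<Sum>i=0..N. a i * complex_of_real (lam i) / (z - gam i)) / D z"
          using qa g unfolding D_def by blast
        have eb: "jnr_R N lam gam z = (\<Sum>i=0..N. b i * complex_of_real (lam i) / (z - gam i)) / D z"
          using qb g unfolding D_def by blast
        have "(\<Sum>i=0..N. a i * complex_of_real (lam i) / (z - gam i)) / D z =
              (\<Sum>i=0..N. b i * complex_of_real (lam i) / (z - gam i)) / D z"
          using ea eb by (rule trans[OF sym])
        then have "(\<Sum>i=0..N. a i * complex_of_real (lam i) / (z - gam i)) =
              (\<Sum>i=0..N. b i * complex_of_real (lam i) / (z - gam i))"
          using g by (simp add: divide_cancel_right)
        then have "(\<Sum>i=0..N. (a i - b i) * complex_of_real (lam i) / (z - gam i)) = 0"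
          by (simp add: left_diff_distrib diff_divide_distrib sum_subtractf)
        then show "z \<notin> gam ` {0..N} \<and> (\<Sum>i=0..N. (a i - b i) * complex_of_real (lam i) / (z - gam i)) = 0"
          using g by simp
      qed (use infS in auto)
      moreover have "lam i \<noteq> 0" using assms(2)[of i] True by auto
      ultimately show ?thesis by simp
    qed
  qed
  show ?thesis
  proof (rule ex1I[where a=a0])
    show "?Q a0" by (rule ex)
    fix x assume "?Q x"
    then show "x = a0" by (rule un[OF _ ex])
  qed
qed

end
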